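(* Let $\mathcal B=(\mathcal B_1,\dots,\mathcal B_B)$ be a partition of $\{1,\dots,N\}$ with weights $\omega=(\omega_1,\dots,\omega_B)$, $\omega_b\ge1$. Let $1\le p\le q\le2$ and suppose $A\in\mathbb R^{m\times N}$ satisfies the $\ell^q_\omega$-BRNSP of order $s\ge\|\omega\|_\infty^2$ with constants $0<\rho<1$ and $\tau>0$. Then for all $x,z\in\mathbb R^N$, $$\|z-x\|_{2,p}^{(\omega)}\le\frac{C_\rho}{s^{1-1/p}}\Big(\|z\|_{2,1}^{(\omega)}-\|x\|_{2,1}^{(\omega)}+2\sigma_s(x)_{2,1}^{(\omega)}\Big)+\frac{D_{\rho,\tau}}{s^{1/q-1/p}}\|A(z-x)\|_2,$$ with $C_\rho=\frac{(1+\rho)^2}{1-\rho}$ and $D_{\rho,\tau}=\frac{3+\rho}{1-\rho}\tau$.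
   Context: Block structure: $\mathcal B=(\mathcal B_1,\dots,\mathcal B_B)$ partition of $\{1,\dots,N\}$; $x[b]=x[\mathcal B_b]$; for $S\subseteq\{1,\dots,B\}$, $x[S]$ equals $x$ on blocks in $S$ and $0$ elsewhere, $S^c$ its complement in $\{1,\dots,B\}$. Weights $\omega_b\ge1$, $\|\omega\|_\infty=\max_b\omega_b$, $\omega(S)=\sum_{b\in S}\omega_b^2$. $\|x\|_{2,p}^{(\omega)}=\big(\sum_b\omega_b^{2-p}\|x[b]\|_2^p\big)^{1/p}$. $\|x\|_0^{(\omega)}=\omega(\{b:x[b]\ne0\})$. $\sigma_s(x)_{2,p}^{(\omega)}=\inf\{\|x-z\|_{2,p}^{(\omega)}:\|z\|_0^{(\omega)}\le s\}$. Definition ($\ell^p_\omega$-BRNSP): $A\in\mathbb R^{m\times N}$ satisfies the weighted block $\ell^p$ robust null space property of order $s\ge\|\omega\|_\infty$ with constants $\rho\in(0,1)$, $\tau>0$ if $\|x[S]\|_{2,p}^{(\omega)}\le\frac{\rho}{s^{1-1/p}}\|x[S^c]\|_{2,1}^{(\omega)}+\tau\|Ax\|_2$ for all $x\in\mathbb R^N$ and all $S\subseteq\{1,\dots,B\}$ with $\omega(S)\le s$. *)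

theory Defs
  imports "HOL-Analysis.Analysis"
begin

(* Indices of R^N are 0..<N, blocks are indexed 0..<B.
   Vectors are functions nat => real; only the coordinates in {0..<N} matter.
   Matrices A in R^{m x N} are functions nat => nat => real (rows i<m, columns j<N). *)

definition is_block_partition :: "nat \<Rightarrow> nat \<Rightarrow> (nat \<Rightarrow> nat set) \<Rightarrow> bool" where
  "is_block_partition N B blk \<longleftrightarrow>
     (\<forall>b<B. blk b \<noteq> {}) \<and>
     (\<forall>b<B. \<forall>b'<B. b \<noteq> b' \<longrightarrow> blk b \<inter> blk b' = {}) \<and>
     (\<Union>b\<in>{0..<B}. blk b) = {0..<N}"

definition block_norm :: "(nat \<Rightarrow> nat set) \<Rightarrow> (nat \<Rightarrow> real) \<Rightarrow> nat \<Rightarrow> real" where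
  "block_norm blk x b = sqrt (\<Sum>i\<in>blk b. (x i)\<^sup>2)"

definition wnorm :: "nat \<Rightarrow> (nat \<Rightarrow> nat set) \<Rightarrow> (nat \<Rightarrow> real) \<Rightarrow> real \<Rightarrow> (nat \<Rightarrow> real) \<Rightarrow> real" where
  "wnorm B blk w p x = (\<Sum>b<B. w b powr (2 - p) * block_norm blk x b powr p) powr (1 / p)"

definition wsize :: "(nat \<Rightarrow> real) \<Rightarrow> nat set \<Rightarrow> real" where
  "wsize w S = (\<Sum>b\<in>S. (w b)\<^sup>2)"

definition winf :: "nat \<Rightarrow> (nat \<Rightarrow> real) \<Rightarrow> real" where
  "winf B w = Max (insert 0 (w ` {0..<B}))"

definition wnorm0 :: "nat \<Rightarrow> (nat \<Rightarrow> nat set) \<Rightarrow> (nat \<Rightarrow> real) \<Rightarrow> (nat \<Rightarrow> real) \<Rightarrow> real" where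
  "wnorm0 B blk w x = wsize w {b\<in>{0..<B}. \<exists>i\<in>blk b. x i \<noteq> 0}"

definition restr :: "(nat \<Rightarrow> nat set) \<Rightarrow> nat set \<Rightarrow> (nat \<Rightarrow> real) \<Rightarrow> nat \<Rightarrow> real" where
  "restr blk S x = (\<lambda>i. if i \<in> (\<Union>b\<in>S. blk b) then x i else 0)"

definition best_s_term_error ::
  "nat \<Rightarrow> (nat \<Rightarrow> nat set) \<Rightarrow> (nat \<Rightarrow> real) \<Rightarrow> real \<Rightarrow> real \<Rightarrow> (nat \<Rightarrow> real) \<Rightarrow> real" where
  "best_s_term_error B blk w p s x =
     Inf {wnorm B blk w p (x - z) | z. wnorm0 B blk w z \<le> s}"

definition mat_apply :: "nat \<Rightarrow> (nat \<Rightarrow> nat \<Rightarrow> real) \<Rightarrow> (nat \<Rightarrow> real) \<Rightarrow> nat \<Rightarrow> real" where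
  "mat_apply N A x = (\<lambda>i. \<Sum>j<N. A i j * x j)"

definition eucl_norm :: "nat \<Rightarrow> (nat \<Rightarrow> real) \<Rightarrow> real" where
  "eucl_norm m y = sqrt (\<Sum>i<m. (y i)\<^sup>2)"

definition wBRNSP ::
  "nat \<Rightarrow> nat \<Rightarrow> nat \<Rightarrow> (nat \<Rightarrow> nat set) \<Rightarrow> (nat \<Rightarrow> real) \<Rightarrow> (nat \<Rightarrow> nat \<Rightarrow> real)
   \<Rightarrow> real \<Rightarrow> real \<Rightarrow> real \<Rightarrow> real \<Rightarrow> bool" where
  "wBRNSP m N B blk w A p s \<rho> \<tau> \<longleftrightarrow>
     s \<ge> winf B w \<and> 0 < \<rho> \<and> \<rho> < 1 \<and> 0 < \<tau> \<and>
     (\<forall>x S. S \<subseteq> {0..<B} \<and> wsize w S \<le> s \<longrightarrow>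
        wnorm B blk w p (restr blk S x)
          \<le> \<rho> / s powr (1 - 1 / p) * wnorm B blk w 1 (restr blk ({0..<B} - S) x)
             + \<tau> * eucl_norm m (mat_apply N A x))"

end

theory Submission
  imports Defs
begin


lemma holder_core:
  fixes S :: "nat set" and w a :: "nat \<Rightarrow> real" and p q :: real
  assumes fin: "finite S" and ne: "S \<noteq> {}" and w1: "\<forall>b\<in>S. w b \<ge> 1" and apos: "\<forall>b\<in>S. a b > 0"
    and p: "0 < p" and pq: "p \<le> q"
  shows "(\<Sum>b\<in>S. w b powr (2-p) * a b powr p) powr (1/p)
     \<le> (\<Sum>b\<in>S. (w b)\<^sup>2) powr (1/p - 1/q) * (\<Sum>b\<in>S. w b powr (2-q) * a b powr q) powr (1/q)"
proof -
  define M where "M = (\<Sum>b\<in>S. (w b)\<^sup>2)"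
  have wpos: "\<And>b. b \<in> S \<Longrightarrow> w b > 0" using w1 by force
  have Mpos: "M > 0" unfolding M_def
    apply (intro sum_pos) using fin ne apply auto using wpos by fastforce
  define Pp where "Pp = (\<Sum>b\<in>S. w b powr (2-p) * a b powr p)"
  define Pq where "Pq = (\<Sum>b\<in>S. w b powr (2-q) * a b powr q)"
  have q: "q > 0" using p pq by linarith
  have key: "\<And>b r. b \<in> S \<Longrightarrow> (w b)\<^sup>2 / M * (a b / w b) powr r = w b powr (2-r) * a b powr r / M"
  proof -
    fix b r assume b: "b \<in> S"
    have "(w b)\<^sup>2 = w b powr 2" using wpos[OF b] by (simp add: powr_numeral)
    moreover have "(a b / w b) powr r = a b powr r / w b powr r"
      using wpos[OF b] apos b by (simp add: powr_divide less_imp_le)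
    moreover have "w b powr 2 / w b powr r = w b powr (2 - r)" by (simp add: powr_diff)
    ultimately show "(w b)\<^sup>2 / M * (a b / w b) powr r = w b powr (2-r) * a b powr r / M"
      by (metis (no_types, lifting) times_divide_eq_left times_divide_eq_right mult.commute)
  qed
  have sum1: "(\<Sum>b\<in>S. (w b)\<^sup>2 / M) = 1" using Mpos unfolding M_def
    by (simp add: sum_divide_distrib[symmetric])
  have jensen: "(\<Sum>b\<in>S. ((w b)\<^sup>2 / M) *\<^sub>R ((a b / w b) powr p)) powr (q/p)
      \<le> (\<Sum>b\<in>S. (w b)\<^sup>2 / M * ((a b / w b) powr p) powr (q/p))"
  proof -
    have c: "convex_on {0<..} (\<lambda>x::real. x powr (q/p))" using pq p by (intro powr_convex) simp
    have "\<And>i. i \<in> S \<Longrightarrow> (a i / w i) powr p \<in> {0<..}" using apos wpos by (metis divide_pos_pos greaterThan_iff powr_gt_zero less_irrefl)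
    moreover have "\<And>i. i \<in> S \<Longrightarrow> (w i)\<^sup>2 / M \<ge> 0" using Mpos by auto
    ultimately show ?thesis
      using convex_on_sum[OF fin ne c sum1, where y = "\<lambda>b. (a b / w b) powr p"] by blast
  qed
  have l: "(\<Sum>b\<in>S. ((w b)\<^sup>2 / M) *\<^sub>R ((a b / w b) powr p)) = Pp / M"
    unfolding Pp_def sum_divide_distrib by (intro sum.cong refl) (simp only: real_scaleR_def key)
  have r: "(\<Sum>b\<in>S. (w b)\<^sup>2 / M * ((a b / w b) powr p) powr (q/p)) = Pq / M"
  proof -
    have "\<And>b. b \<in> S \<Longrightarrow> ((a b / w b) powr p) powr (q/p) = (a b / w b) powr q"
      using p by (simp add: powr_powr)
    then show ?thesis unfolding Pq_def sum_divide_distrib by (intro sum.cong refl) (simp only: key)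
  qed
  have Pp0: "Pp \<ge> 0" unfolding Pp_def by (intro sum_nonneg) auto
  have Pq0: "Pq \<ge> 0" unfolding Pq_def by (intro sum_nonneg) auto
  have J: "(Pp / M) powr (q/p) \<le> Pq / M" using jensen l r by simp
  have "((Pp / M) powr (q/p)) powr (1/q) \<le> (Pq / M) powr (1/q)"
    using J Pp0 Mpos q by (intro powr_mono2) auto
  hence "(Pp / M) powr (1/p) \<le> (Pq / M) powr (1/q)" using p q by (simp add: powr_powr)
  hence "Pp powr (1/p) / M powr (1/p) \<le> Pq powr (1/q) / M powr (1/q)"
    using Pp0 Pq0 Mpos by (simp add: powr_divide)
  hence "Pp powr (1/p) \<le> M powr (1/p) * (Pq powr (1/q) / M powr (1/q))"
    using Mpos by (simp add: divide_le_eq mult.commute)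
  also have "\<dots> = M powr (1/p - 1/q) * Pq powr (1/q)"
    by (simp add: powr_diff)
  finally show ?thesis unfolding Pp_def Pq_def M_def .
qed



lemma holder:
  fixes S :: "nat set" and w a :: "nat \<Rightarrow> real" and p q :: real
  assumes fin: "finite S" and w1: "\<forall>b\<in>S. w b \<ge> 1" and a0: "\<forall>b\<in>S. a b \<ge> 0"
    and p: "0 < p" and pq: "p \<le> q"
  shows "(\<Sum>b\<in>S. w b powr (2-p) * a b powr p) powr (1/p)
     \<le> (\<Sum>b\<in>S. (w b)\<^sup>2) powr (1/p - 1/q) * (\<Sum>b\<in>S. w b powr (2-q) * a b powr q) powr (1/q)"
proof -
  define S' where "S' = {b\<in>S. a b > 0}"
  have sub: "S' \<subseteq> S" unfolding S'_def by auto
  have fin': "finite S'" using fin sub finite_subset by blast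
  have red: "\<And>r. (\<Sum>b\<in>S. w b powr (2-r) * a b powr r) = (\<Sum>b\<in>S'. w b powr (2-r) * a b powr r)"
    apply (rule sum.mono_neutral_right[OF fin sub])
    using a0 unfolding S'_def by force
  show ?thesis
  proof (cases "S' = {}")
    case True
    then show ?thesis unfolding red by simp
  next
    case False
    have c: "(\<Sum>b\<in>S'. w b powr (2-p) * a b powr p) powr (1/p)
     \<le> (\<Sum>b\<in>S'. (w b)\<^sup>2) powr (1/p - 1/q) * (\<Sum>b\<in>S'. w b powr (2-q) * a b powr q) powr (1/q)"
      apply (rule holder_core[OF fin' False _ _ p pq]) using w1 sub unfolding S'_def by auto
    have "(\<Sum>b\<in>S'. (w b)\<^sup>2) powr (1/p - 1/q) \<le> (\<Sum>b\<in>S. (w b)\<^sup>2) powr (1/p - 1/q)"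
      apply (rule powr_mono2)
      using p pq apply (simp add: divide_right_mono frac_le)
       apply (simp add: sum_nonneg)
      by (rule sum_mono2[OF fin sub]) auto
    then show ?thesis unfolding red using c
      by (meson mult_right_mono order_trans powr_ge_zero)
  qed
qed



lemma powr_subadd:
  fixes X Y r :: real
  assumes "0 \<le> X" "0 \<le> Y" "0 < r" "r \<le> 1"
  shows "(X + Y) powr r \<le> X powr r + Y powr r"
proof (cases "X + Y = 0")
  case True
  then show ?thesis using assms by simp
next
  case False
  define T where "T = X + Y"
  have T: "T > 0" using False assms unfolding T_def by simp
  have le: "\<And>u::real. 0 \<le> u \<Longrightarrow> u \<le> 1 \<Longrightarrow> u \<le> u powr r"
  proof -
    fix u :: real assume u: "0 \<le> u" "u \<le> 1"
    show "u \<le> u powr r"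
    proof (cases "u = 0")
      case True then show ?thesis by simp
    next
      case False
      then have "u powr 1 \<le> u powr r" using powr_mono'[of r 1 u] u assms by simp
      then show ?thesis using u by (simp add: powr_one)
    qed
  qed
  have "1 = X / T + Y / T" using T unfolding T_def by (simp add: add_divide_distrib[symmetric])
  also have "\<dots> \<le> (X / T) powr r + (Y / T) powr r"
    using le[of "X/T"] le[of "Y/T"] assms T unfolding T_def by (intro add_mono) auto
  also have "\<dots> = (X powr r + Y powr r) / T powr r"
    using assms T by (simp add: powr_divide add_divide_distrib)
  finally have "T powr r \<le> X powr r + Y powr r" using T by (simp add: divide_le_eq)
  then show ?thesis unfolding T_def .
qed

lemma part_fin: "is_block_partition N B blk \<Longrightarrow> b < B \<Longrightarrow> finite (blk b)"
  unfolding is_block_partition_def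
  by (metis (no_types, lifting) UN_I atLeastLessThan_iff finite_atLeastLessThan finite_subset le0 subsetI)

lemma bn_L2: "block_norm blk x b = L2_set x (blk b)"
  unfolding block_norm_def L2_set_def by simp

lemma bn_nonneg: "block_norm blk x b \<ge> 0"
  unfolding block_norm_def by (simp add: sum_nonneg)

lemma bn_tri1: "block_norm blk f b \<le> block_norm blk g b + block_norm blk (f - g) b"
proof -
  have "block_norm blk f b = L2_set (\<lambda>i. g i + (f i - g i)) (blk b)" by (simp add: bn_L2)
  also have "\<dots> \<le> L2_set g (blk b) + L2_set (\<lambda>i. f i - g i) (blk b)" by (rule L2_set_triangle_ineq)
  finally show ?thesis by (simp add: bn_L2 fun_diff_def)
qed

lemma bn_tri2: "block_norm blk (f - g) b \<le> block_norm blk f b + block_norm blk g b"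
proof -
  have "block_norm blk (f - g) b = L2_set (\<lambda>i. f i + (- g i)) (blk b)" by (simp add: bn_L2 fun_diff_def)
  also have "\<dots> \<le> L2_set f (blk b) + L2_set (\<lambda>i. - g i) (blk b)" by (rule L2_set_triangle_ineq)
  also have "L2_set (\<lambda>i. - g i) (blk b) = L2_set g (blk b)" by (simp add: L2_set_def)
  finally show ?thesis by (simp add: bn_L2 fun_diff_def)
qed

lemma bn_comm: "block_norm blk (f - g) b = block_norm blk (g - f) b"
  unfolding block_norm_def by (simp add: power2_commute)

lemma bn_restr:
  assumes part: "is_block_partition N B blk" and S: "S \<subseteq> {0..<B}" and b: "b < B"
  shows "block_norm blk (restr blk S x) b = (if b \<in> S then block_norm blk x b else 0)"
proof (cases "b \<in> S")
  case True
  then have "\<And>i. i \<in> blk b \<Longrightarrow> restr blk S x i = x i" unfolding restr_def by auto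
  then show ?thesis using True unfolding block_norm_def by simp
next
  case False
  have "\<And>i. i \<in> blk b \<Longrightarrow> restr blk S x i = 0"
  proof -
    fix i assume i: "i \<in> blk b"
    have "i \<notin> (\<Union>b'\<in>S. blk b')"
    proof
      assume "i \<in> (\<Union>b'\<in>S. blk b')"
      then obtain b' where "b' \<in> S" "i \<in> blk b'" by auto
      moreover then have "b' \<noteq> b" "b' < B" using False S by auto
      ultimately show False using part i b unfolding is_block_partition_def by blast
    qed
    then show "restr blk S x i = 0" unfolding restr_def by simp
  qed
  then show ?thesis using False unfolding block_norm_def by simp
qed

lemma wnorm_sum: "wnorm B blk w p x = (\<Sum>b\<in>{0..<B}. w b powr (2-p) * block_norm blk x b powr p) powr (1/p)"
  by (simp add: wnorm_def atLeast0LessThan)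

lemma wnorm_restr:
  assumes part: "is_block_partition N B blk" and S: "S \<subseteq> {0..<B}"
  shows "wnorm B blk w p (restr blk S x) = (\<Sum>b\<in>S. w b powr (2-p) * block_norm blk x b powr p) powr (1/p)"
proof -
  have "(\<Sum>b\<in>{0..<B}. w b powr (2-p) * block_norm blk (restr blk S x) b powr p)
      = (\<Sum>b\<in>{0..<B}. if b \<in> S then w b powr (2-p) * block_norm blk x b powr p else 0)"
    using bn_restr[OF part S] by (intro sum.cong refl) auto
  also have "\<dots> = (\<Sum>b\<in>S. w b powr (2-p) * block_norm blk x b powr p)"
    using S by (simp add: sum.inter_restrict[symmetric] Int_absorb1 inf.absorb2)
  finally show ?thesis by (simp add: wnorm_sum)
qed

lemma lin1:
  fixes w c :: "nat \<Rightarrow> real"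
  assumes "\<forall>b\<in>S. 0 \<le> w b" "\<forall>b\<in>S. 0 \<le> c b"
  shows "(\<Sum>b\<in>S. w b powr (2-1) * c b powr 1) powr (1/1) = (\<Sum>b\<in>S. w b * c b)"
proof -
  have "(\<Sum>b\<in>S. w b powr (2-1) * c b powr 1) = (\<Sum>b\<in>S. w b * c b)"
  proof (intro sum.cong refl)
    fix b assume "b \<in> S"
    then have "0 \<le> w b" "0 \<le> c b" using assms by auto
    then show "w b powr (2-1) * c b powr 1 = w b * c b" using powr_one[of "w b"] powr_one[of "c b"] by (simp del: powr_one')
  qed
  moreover have "(\<Sum>b\<in>S. w b * c b) \<ge> 0" using assms by (intro sum_nonneg) auto
  ultimately show ?thesis using powr_one by (simp del: powr_one')
qed



lemma main_pos:
  fixes m N B :: nat and blk :: "nat \<Rightarrow> nat set" and w :: "nat \<Rightarrow> real"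
    and A :: "nat \<Rightarrow> nat \<Rightarrow> real" and p q s \<rho> \<tau> :: real and x z :: "nat \<Rightarrow> real"
  assumes part: "is_block_partition N B blk"
    and weights: "\<forall>b<B. w b \<ge> 1"
    and pq: "1 \<le> p" "p \<le> q" "q \<le> 2"
    and spos: "s > 0"
    and rho: "0 < \<rho>" "\<rho> < 1" and tau: "0 < \<tau>"
    and nsp: "wBRNSP m N B blk w A q s \<rho> \<tau>"
  shows "wnorm B blk w p (z - x)
      \<le> ((1 + \<rho>)\<^sup>2 / (1 - \<rho>)) / s powr (1 - 1 / p)
          * (wnorm B blk w 1 z - wnorm B blk w 1 x + 2 * best_s_term_error B blk w 1 s x)
        + ((3 + \<rho>) / (1 - \<rho>) * \<tau>) / s powr (1 / q - 1 / p)
          * eucl_norm m (mat_apply N A (z - x))"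
proof -
  define v where "v = z - x"
  define a where "a = block_norm blk v"
  define V where "V = {0..<B}"
  define L where "L = (\<lambda>S. \<Sum>b\<in>S. w b * a b)"
  define Pr where "Pr = (\<lambda>r S. \<Sum>b\<in>S. w b powr (2-r) * a b powr r)"
  define Av where "Av = eucl_norm m (mat_apply N A v)"
  have finV: "finite V" unfolding V_def by simp
  have wV: "\<forall>b\<in>V. w b \<ge> 1" using weights unfolding V_def by auto
  have a0: "\<And>b. a b \<ge> 0" unfolding a_def by (rule bn_nonneg)
  have w0: "\<And>b. b \<in> V \<Longrightarrow> w b \<ge> 0" using wV by force
  have wa0: "\<And>b. b \<in> V \<Longrightarrow> w b * a b \<ge> 0"
    using wV a0 by (meson dual_order.trans zero_le_mult_iff zero_le_one)
  have Lnn: "\<And>S. S \<subseteq> V \<Longrightarrow> L S \<ge> 0" unfolding L_def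
    using wa0 by (intro sum_nonneg) auto
  have Lmono: "\<And>S. S \<subseteq> V \<Longrightarrow> L S \<le> L V" unfolding L_def
    using wa0 finV by (intro sum_mono2) auto
  have Av0: "Av \<ge> 0" unfolding Av_def eucl_norm_def by (simp add: sum_nonneg)
  have q1: "q \<ge> 1" and q0: "q > 0" and p0: "p > 0" using pq by auto
  have rest1: "\<And>S. S \<subseteq> V \<Longrightarrow> wnorm B blk w 1 (restr blk S v) = L S"
  proof -
    fix S assume S: "S \<subseteq> V"
    have "wnorm B blk w 1 (restr blk S v) = (\<Sum>b\<in>S. w b powr (2-1) * a b powr 1) powr (1/1)"
      using wnorm_restr[OF part] S unfolding V_def a_def by blast
    also have "\<dots> = L S" unfolding L_def using S wV a0 by (intro lin1) (blast intro: w0 a0)+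
    finally show "wnorm B blk w 1 (restr blk S v) = L S" .
  qed
  have NSP: "\<And>S. S \<subseteq> V \<Longrightarrow> wsize w S \<le> s \<Longrightarrow>
      Pr q S powr (1/q) \<le> \<rho> / s powr (1-1/q) * L (V - S) + \<tau> * Av"
  proof -
    fix S assume S: "S \<subseteq> V" "wsize w S \<le> s"
    have "wnorm B blk w q (restr blk S v)
          \<le> \<rho> / s powr (1 - 1 / q) * wnorm B blk w 1 (restr blk ({0..<B} - S) v)
             + \<tau> * eucl_norm m (mat_apply N A v)"
      using nsp S unfolding wBRNSP_def V_def by blast
    moreover have "wnorm B blk w q (restr blk S v) = Pr q S powr (1/q)"
      using wnorm_restr[OF part] S unfolding V_def a_def Pr_def by blast
    moreover have "wnorm B blk w 1 (restr blk ({0..<B} - S) v) = L (V - S)"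
      using rest1[of "V - S"] unfolding V_def by blast
    ultimately show "Pr q S powr (1/q) \<le> \<rho> / s powr (1-1/q) * L (V - S) + \<tau> * Av"
      unfolding Av_def by simp
  qed
  have HA: "\<And>T. T \<subseteq> V \<Longrightarrow> wsize w T \<le> s \<Longrightarrow> L T \<le> \<rho> * L (V - T) + \<tau> * s powr (1-1/q) * Av"
  proof -
    fix T assume T: "T \<subseteq> V" "wsize w T \<le> s"
    have finT: "finite T" using T finV finite_subset by blast
    have h: "(\<Sum>b\<in>T. w b powr (2-1) * a b powr 1) powr (1/1)
        \<le> (\<Sum>b\<in>T. (w b)\<^sup>2) powr (1/1 - 1/q) * (\<Sum>b\<in>T. w b powr (2-q) * a b powr q) powr (1/q)"
      using T wV a0 by (intro holder[OF finT _ _ _ q1]) auto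
    have "(\<Sum>b\<in>T. w b powr (2-1) * a b powr 1) powr (1/1) = L T"
      unfolding L_def using T wV a0 by (intro lin1) (blast intro: w0 a0)+
    then have h2: "L T \<le> wsize w T powr (1 - 1/q) * Pr q T powr (1/q)"
      using h unfolding Pr_def wsize_def by simp
    have ws: "wsize w T powr (1-1/q) \<le> s powr (1-1/q)"
      using T q1 by (intro powr_mono2) (auto simp: wsize_def sum_nonneg)
    have "L T \<le> s powr (1-1/q) * (\<rho> / s powr (1-1/q) * L (V - T) + \<tau> * Av)"
      using h2 ws NSP[OF T] by (meson mult_mono order_trans powr_ge_zero)
    also have "\<dots> = \<rho> * L (V - T) + \<tau> * s powr (1-1/q) * Av"
      using spos by (simp add: field_simps)
    finally show "L T \<le> \<rho> * L (V - T) + \<tau> * s powr (1-1/q) * Av" .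
  qed
  have n1: "\<And>f. wnorm B blk w 1 f = (\<Sum>b\<in>V. w b * block_norm blk f b)"
  proof -
    fix f
    have "wnorm B blk w 1 f = (\<Sum>b\<in>V. w b powr (2-1) * block_norm blk f b powr 1) powr (1/1)"
      unfolding V_def by (rule wnorm_sum)
    also have "\<dots> = (\<Sum>b\<in>V. w b * block_norm blk f b)"
      by (intro lin1) (blast intro: w0 bn_nonneg)+
    finally show "wnorm B blk w 1 f = (\<Sum>b\<in>V. w b * block_norm blk f b)" .
  qed
  have HB: "\<And>z'. wnorm0 B blk w z' \<le> s \<Longrightarrow> L V \<le> (1+\<rho>)/(1-\<rho>) * (wnorm B blk w 1 z - wnorm B blk w 1 x + 2 * wnorm B blk w 1 (x - z'))
       + 2 * \<tau> * s powr (1-1/q) / (1-\<rho>) * Av"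
  proof -
    fix z' assume z': "wnorm0 B blk w z' \<le> s"
    define T where "T = {b\<in>{0..<B}. \<exists>i\<in>blk b. z' i \<noteq> 0}"
    have TV: "T \<subseteq> V" unfolding T_def V_def by auto
    have wT: "wsize w T \<le> s" using z' unfolding wnorm0_def T_def .
    define bx where "bx = block_norm blk x"
    define bz where "bz = block_norm blk z"
    have split: "\<And>g. sum g V = sum g T + sum g (V - T)"
      using TV finV by (simp add: sum.subset_diff add.commute)
    have onT: "\<And>b. b \<in> T \<Longrightarrow> w b * bx b - w b * a b \<le> w b * bz b"
    proof -
      fix b assume b: "b \<in> T"
      have "bx b \<le> bz b + block_norm blk (x - z) b" unfolding bx_def bz_def by (rule bn_tri1)
      also have "block_norm blk (x - z) b = a b" unfolding a_def v_def by (rule bn_comm)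
      finally have "bx b - a b \<le> bz b" by simp
      then have "w b * (bx b - a b) \<le> w b * bz b" using w0 b TV by (intro mult_left_mono) auto
      then show "w b * bx b - w b * a b \<le> w b * bz b" by (simp add: algebra_simps)
    qed
    have onTc: "\<And>b. b \<in> V - T \<Longrightarrow> w b * a b - w b * bx b \<le> w b * bz b"
    proof -
      fix b assume b: "b \<in> V - T"
      have "a b \<le> bz b + bx b" unfolding a_def v_def bx_def bz_def by (rule bn_tri2)
      then have "w b * (a b - bx b) \<le> w b * bz b" using w0 b by (intro mult_left_mono) auto
      then show "w b * a b - w b * bx b \<le> w b * bz b" by (simp add: algebra_simps)
    qed
    have xz': "\<And>b. b \<in> V - T \<Longrightarrow> block_norm blk (x - z') b = bx b"
    proof -
      fix b assume b: "b \<in> V - T"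
      then have "\<And>i. i \<in> blk b \<Longrightarrow> z' i = 0" unfolding T_def V_def by auto
      then show "block_norm blk (x - z') b = bx b" unfolding bx_def block_norm_def by simp
    qed
    have sig: "(\<Sum>b\<in>V-T. w b * bx b) \<le> wnorm B blk w 1 (x - z')"
    proof -
      have "(\<Sum>b\<in>V-T. w b * bx b) = (\<Sum>b\<in>V-T. w b * block_norm blk (x - z') b)"
        using xz' by simp
      also have "\<dots> \<le> (\<Sum>b\<in>T. w b * block_norm blk (x - z') b) + (\<Sum>b\<in>V-T. w b * block_norm blk (x - z') b)"
        using TV w0 bn_nonneg by (simp add: sum_nonneg mult_nonneg_nonneg subset_iff)
      also have "\<dots> = wnorm B blk w 1 (x - z')" using split n1 by metis
      finally show ?thesis .
    qed
    define E where "E = wnorm B blk w 1 z - wnorm B blk w 1 x + 2 * wnorm B blk w 1 (x - z')"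
    have wz: "wnorm B blk w 1 z = (\<Sum>b\<in>T. w b * bz b) + (\<Sum>b\<in>V-T. w b * bz b)"
      using n1 split unfolding bz_def by simp
    have wx: "wnorm B blk w 1 x = (\<Sum>b\<in>T. w b * bx b) + (\<Sum>b\<in>V-T. w b * bx b)"
      using n1 split unfolding bx_def by simp
    have s1: "(\<Sum>b\<in>T. w b * bx b) - L T \<le> (\<Sum>b\<in>T. w b * bz b)"
      unfolding L_def using onT by (simp add: sum_subtractf[symmetric] sum_mono)
    have s2: "L (V - T) - (\<Sum>b\<in>V-T. w b * bx b) \<le> (\<Sum>b\<in>V-T. w b * bz b)"
      unfolding L_def sum_subtractf[symmetric] by (rule sum_mono) (rule onTc)
    have Y: "L (V - T) \<le> E + L T" using s1 s2 sig wz wx unfolding E_def by linarith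
    define c where "c = \<tau> * s powr (1-1/q) * Av"
    have X: "L T \<le> \<rho> * L (V - T) + c" using HA[OF TV wT] unfolding c_def .
    have LV: "L V = L T + L (V - T)" unfolding L_def using split by simp
    have i1: "(1-\<rho>) * L T \<le> (1-\<rho>) * (\<rho> * L (V - T) + c)" using X rho by (intro mult_left_mono) auto
    have i2: "\<rho> * ((1-\<rho>) * L (V - T)) \<le> \<rho> * (E + c)"
    proof -
      have "(1-\<rho>) * L (V - T) \<le> E + c" using X Y by (simp add: algebra_simps)
      then show ?thesis using rho by (intro mult_left_mono) auto
    qed
    have "(1-\<rho>) * L V \<le> (1+\<rho>) * E + 2 * c"
      using i1 i2 X Y unfolding LV by (simp add: algebra_simps)
    then have "L V \<le> ((1+\<rho>) * E + 2 * c) / (1-\<rho>)" using rho by (simp add: pos_le_divide_eq mult.commute)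
    also have "\<dots> = (1+\<rho>)/(1-\<rho>) * E + 2 * \<tau> * s powr (1-1/q) / (1-\<rho>) * Av"
      unfolding c_def by (simp add: add_divide_distrib[of "(1+\<rho>)*E"] times_divide_eq_left[symmetric] mult.assoc del: times_divide_eq_left)
    finally show "L V \<le> (1+\<rho>)/(1-\<rho>) * (wnorm B blk w 1 z - wnorm B blk w 1 x + 2 * wnorm B blk w 1 (x - z'))
       + 2 * \<tau> * s powr (1-1/q) / (1-\<rho>) * Av" unfolding E_def .
  qed
  define t where "t = L V / s"
  define S where "S = {b\<in>V. a b > t * w b}"
  have SV: "S \<subseteq> V" unfolding S_def by auto
  have finS: "finite S" using SV finV finite_subset by blast
  have LV0: "L V \<ge> 0" using Lnn by simp
  have t0: "t \<ge> 0" unfolding t_def using LV0 spos by simp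
  have memle: "\<And>b. b \<in> V \<Longrightarrow> w b * a b \<le> L V"
    unfolding L_def using finV wa0 by (intro member_le_sum) auto
  have wS: "wsize w S \<le> s"
  proof (cases "t = 0")
    case True
    have "S = {}"
    proof (rule ccontr)
      assume "S \<noteq> {}"
      then obtain b where b: "b \<in> S" by auto
      then have "a b > 0" "b \<in> V" using True unfolding S_def by auto
      then have "w b * a b > 0" using wV by (meson less_le_trans mult_pos_pos zero_less_one)
      moreover have "L V = 0" using True spos unfolding t_def by simp
      ultimately show False using memle[OF \<open>b \<in> V\<close>] by simp
    qed
    then show ?thesis using spos by (simp add: wsize_def)
  next
    case False
    then have tpos: "t > 0" using t0 by simp
    have "wsize w S * t = (\<Sum>b\<in>S. (w b)\<^sup>2 * t)" unfolding wsize_def by (simp add: sum_distrib_right)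
    also have "\<dots> \<le> (\<Sum>b\<in>S. w b * a b)"
    proof (rule sum_mono)
      fix b assume b: "b \<in> S"
      then have "t * w b < a b" "w b \<ge> 1" using SV wV unfolding S_def by auto
      then have "w b * (t * w b) \<le> w b * a b" by (intro mult_left_mono) auto
      then show "(w b)\<^sup>2 * t \<le> w b * a b" by (simp add: power2_eq_square algebra_simps)
    qed
    also have "\<dots> \<le> L V" using Lmono[OF SV] unfolding L_def .
    also have "\<dots> = s * t" unfolding t_def using spos by simp
    finally show ?thesis using tpos by simp
  qed
  have each: "\<And>b. b \<in> V - S \<Longrightarrow> w b powr (2-p) * a b powr p \<le> t powr (p-1) * (w b * a b)"
  proof -
    fix b assume b: "b \<in> V - S"
    have wb: "w b \<ge> 1" using b wV by auto
    have ab: "a b \<le> t * w b" using b unfolding S_def by auto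
    show "w b powr (2-p) * a b powr p \<le> t powr (p-1) * (w b * a b)"
    proof (cases "a b = 0")
      case True then show ?thesis using t0 wb by simp
    next
      case False
      then have apos: "a b > 0" using a0[of b] by linarith
      have "a b powr (p-1) * a b = a b powr (p-1) * a b powr 1" using apos by simp
      also have "\<dots> = a b powr (p - 1 + 1)" by (rule powr_add[symmetric])
      finally have "a b powr p = a b powr (p-1) * a b" by simp
      moreover have "a b powr (p-1) \<le> (t * w b) powr (p-1)"
        using ab apos pq by (intro powr_mono2) auto
      moreover have "(t * w b) powr (p-1) = t powr (p-1) * w b powr (p-1)"
        using t0 wb by (simp add: powr_mult)
      ultimately have "w b powr (2-p) * a b powr p \<le> w b powr (2-p) * (t powr (p-1) * w b powr (p-1)) * a b"
        using apos by (simp add: mult_left_mono mult_right_mono mult.assoc)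
      also have "\<dots> = t powr (p-1) * (w b powr (2-p) * w b powr (p-1)) * a b" by (simp add: algebra_simps)
      also have "w b powr (2-p) * w b powr (p-1) = w b"
      proof -
        have "w b powr (2-p) * w b powr (p-1) = w b powr (2 - p + (p - 1))" by (rule powr_add[symmetric])
        then show ?thesis using wb by simp
      qed
      finally show ?thesis by (simp add: algebra_simps)
    qed
  qed
  have remP: "Pr p (V - S) \<le> t powr (p-1) * L V"
  proof -
    have "Pr p (V - S) \<le> (\<Sum>b\<in>V-S. t powr (p-1) * (w b * a b))"
      unfolding Pr_def by (rule sum_mono) (rule each)
    also have "\<dots> = t powr (p-1) * L (V - S)" unfolding L_def by (simp add: sum_distrib_left)
    also have "\<dots> \<le> t powr (p-1) * L V" using Lmono[of "V - S"] by (intro mult_left_mono) auto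
    finally show ?thesis .
  qed
  have Pr0: "\<And>r S. Pr r S \<ge> 0" unfolding Pr_def by (intro sum_nonneg) auto
  have rem: "Pr p (V - S) powr (1/p) \<le> s powr (1/p - 1) * L V"
  proof -
    have "Pr p (V - S) powr (1/p) \<le> (t powr (p-1) * L V) powr (1/p)"
      using remP Pr0 p0 by (intro powr_mono2) auto
    also have "\<dots> = s powr (1/p - 1) * L V"
    proof (cases "L V = 0")
      case True then show ?thesis by simp
    next
      case False
      then have LVp: "L V > 0" using LV0 by simp
      have "(t powr (p-1) * L V) powr (1/p) = t powr ((p-1)/p) * L V powr (1/p)"
        using t0 LV0 by (simp add: powr_mult powr_powr)
      also have "t powr ((p-1)/p) = L V powr ((p-1)/p) / s powr ((p-1)/p)"
        unfolding t_def using LV0 spos by (simp add: powr_divide)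
      also have "L V powr ((p-1)/p) / s powr ((p-1)/p) * L V powr (1/p)
          = (L V powr ((p-1)/p) * L V powr (1/p)) * (1 / s powr ((p-1)/p))" by simp
      also have "L V powr ((p-1)/p) * L V powr (1/p) = L V"
      proof -
        have "(p-1)/p + 1/p = 1" using p0 by (simp add: field_simps)
        then show ?thesis using LVp powr_add[of "L V" "(p-1)/p" "1/p", symmetric] by simp
      qed
      also have "1 / s powr ((p-1)/p) = s powr (1/p - 1)"
      proof -
        have "-((p-1)/p) = 1/p - 1" using p0 by (simp add: field_simps)
        then show ?thesis by (metis powr_minus_divide)
      qed
      finally show ?thesis by simp
    qed
    finally show ?thesis .
  qed
  define \<sigma>1 where "\<sigma>1 = s powr (1/p - 1)"
  define \<sigma>2 where "\<sigma>2 = s powr (1 - 1/q)"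
  define \<sigma>3 where "\<sigma>3 = s powr (1/p - 1/q)"
  have s12: "\<sigma>1 * \<sigma>2 = \<sigma>3" unfolding \<sigma>1_def \<sigma>2_def \<sigma>3_def
    by (simp add: powr_add[symmetric])
  have s2pos: "\<sigma>2 > 0" and s1pos: "\<sigma>1 > 0" and s3pos: "\<sigma>3 > 0"
    unfolding \<sigma>1_def \<sigma>2_def \<sigma>3_def using spos by auto
  have mainS: "Pr p S powr (1/p) \<le> \<rho> * \<sigma>1 * L V + \<tau> * \<sigma>3 * Av"
  proof -
    have h: "(\<Sum>b\<in>S. w b powr (2-p) * a b powr p) powr (1/p)
        \<le> (\<Sum>b\<in>S. (w b)\<^sup>2) powr (1/p - 1/q) * (\<Sum>b\<in>S. w b powr (2-q) * a b powr q) powr (1/q)"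
      using SV wV a0 p0 pq by (intro holder[OF finS]) auto
    then have h2: "Pr p S powr (1/p) \<le> wsize w S powr (1/p - 1/q) * Pr q S powr (1/q)"
      unfolding Pr_def wsize_def .
    have ws: "wsize w S powr (1/p - 1/q) \<le> \<sigma>3"
      unfolding \<sigma>3_def using wS p0 pq by (intro powr_mono2) (auto simp: wsize_def sum_nonneg frac_le)
    have n: "Pr q S powr (1/q) \<le> \<rho> / \<sigma>2 * L V + \<tau> * Av"
    proof -
      have "\<rho> / \<sigma>2 * L (V - S) \<le> \<rho> / \<sigma>2 * L V"
        using Lmono[of "V - S"] rho s2pos by (intro mult_left_mono) auto
      then show ?thesis using NSP[OF SV wS] unfolding \<sigma>2_def by linarith
    qed
    have "Pr p S powr (1/p) \<le> \<sigma>3 * (\<rho> / \<sigma>2 * L V + \<tau> * Av)"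
      using h2 ws n by (meson mult_mono order_trans powr_ge_zero less_imp_le s3pos)
    also have "\<dots> = \<rho> * (\<sigma>3 / \<sigma>2) * L V + \<tau> * \<sigma>3 * Av" by (simp add: algebra_simps)
    also have "\<sigma>3 / \<sigma>2 = \<sigma>1" using s12 s2pos by (simp add: field_simps)
    finally show ?thesis .
  qed
  have full: "wnorm B blk w p v \<le> (1 + \<rho>) * \<sigma>1 * L V + \<tau> * \<sigma>3 * Av"
  proof -
    have "wnorm B blk w p v = Pr p V powr (1/p)" unfolding Pr_def a_def V_def by (rule wnorm_sum)
    also have "Pr p V = Pr p S + Pr p (V - S)" unfolding Pr_def
      using SV finV by (simp add: sum.subset_diff add.commute)
    also have "(Pr p S + Pr p (V - S)) powr (1/p) \<le> Pr p S powr (1/p) + Pr p (V - S) powr (1/p)"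
      using Pr0 p0 pq by (intro powr_subadd) auto
    also have "\<dots> \<le> (\<rho> * \<sigma>1 * L V + \<tau> * \<sigma>3 * Av) + \<sigma>1 * L V"
      using mainS rem unfolding \<sigma>1_def by (intro add_mono) auto
    finally show ?thesis by (simp add: algebra_simps)
  qed
  define K where "K = (1 + \<rho>)\<^sup>2 / (1 - \<rho>) * \<sigma>1"
  define D where "D = (3 + \<rho>) / (1 - \<rho>) * \<tau> * \<sigma>3 * Av"
  have Kpos: "K > 0" unfolding K_def using rho s1pos by simp
  have F: "\<And>z'. wnorm0 B blk w z' \<le> s \<Longrightarrow>
     wnorm B blk w p v \<le> K * (wnorm B blk w 1 z - wnorm B blk w 1 x + 2 * wnorm B blk w 1 (x - z')) + D"
  proof -
    fix z' assume z': "wnorm0 B blk w z' \<le> s"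
    define E where "E = wnorm B blk w 1 z - wnorm B blk w 1 x + 2 * wnorm B blk w 1 (x - z')"
    have "(1 + \<rho>) * \<sigma>1 * L V \<le> (1 + \<rho>) * \<sigma>1 * ((1+\<rho>)/(1-\<rho>) * E + 2 * \<tau> * \<sigma>2 / (1-\<rho>) * Av)"
      using HB[OF z'] rho s1pos unfolding E_def \<sigma>2_def by (intro mult_left_mono) auto
    also have "\<dots> = K * E + 2 * (1 + \<rho>) / (1 - \<rho>) * \<tau> * (\<sigma>1 * \<sigma>2) * Av"
      unfolding K_def by (simp add: algebra_simps power2_eq_square)
    finally have "wnorm B blk w p v \<le> K * E + (2 * (1 + \<rho>) / (1 - \<rho>) + 1) * \<tau> * \<sigma>3 * Av"
      using full s12 by (simp add: algebra_simps)
    also have "2 * (1 + \<rho>) / (1 - \<rho>) + 1 = (3 + \<rho>) / (1 - \<rho>)"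
      using rho by (simp add: field_simps)
    finally show "wnorm B blk w p v \<le> K * E + D" unfolding D_def by (simp add: algebra_simps)
  qed
  define Set where "Set = {wnorm B blk w 1 (x - z') | z'. wnorm0 B blk w z' \<le> s}"
  have ne: "Set \<noteq> {}"
  proof -
    have "wnorm0 B blk w (\<lambda>_. 0) \<le> s" using spos by (simp add: wnorm0_def wsize_def)
    then show ?thesis unfolding Set_def by blast
  qed
  define W where "W = wnorm B blk w p v"
  define Z where "Z = wnorm B blk w 1 z - wnorm B blk w 1 x"
  have lb: "((W - D) / K - Z) / 2 \<le> Inf Set"
  proof (rule cInf_greatest[OF ne])
    fix y assume "y \<in> Set"
    then obtain z' where y: "y = wnorm B blk w 1 (x - z')" and z': "wnorm0 B blk w z' \<le> s"
      unfolding Set_def by blast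
    have "W - D \<le> K * (Z + 2 * y)" using F[OF z'] unfolding W_def Z_def y by simp
    then have "(W - D) / K \<le> Z + 2 * y" using Kpos by (simp add: pos_divide_le_eq mult.commute)
    then show "((W - D) / K - Z) / 2 \<le> y" by simp
  qed
  have fin: "W \<le> K * (Z + 2 * Inf Set) + D"
  proof -
    have "(W - D) / K \<le> Z + 2 * Inf Set" using lb by simp
    then have "W - D \<le> K * (Z + 2 * Inf Set)" using Kpos by (simp add: pos_divide_le_eq mult.commute)
    then show ?thesis by simp
  qed
  have c1: "((1 + \<rho>)\<^sup>2 / (1 - \<rho>)) / s powr (1 - 1 / p) = K"
  proof -
    have "-(1 - 1/p) = 1/p - 1" by simp
    then have "1 / s powr (1 - 1/p) = \<sigma>1" unfolding \<sigma>1_def by (metis powr_minus_divide)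
    moreover have "((1 + \<rho>)\<^sup>2 / (1 - \<rho>)) / s powr (1 - 1 / p) = ((1 + \<rho>)\<^sup>2 / (1 - \<rho>)) * (1 / s powr (1 - 1/p))" by simp
    ultimately show ?thesis unfolding K_def by simp
  qed
  have c2: "((3 + \<rho>) / (1 - \<rho>) * \<tau>) / s powr (1 / q - 1 / p) * eucl_norm m (mat_apply N A (z - x)) = D"
  proof -
    have "-(1/q - 1/p) = 1/p - 1/q" by simp
    then have "1 / s powr (1/q - 1/p) = \<sigma>3" unfolding \<sigma>3_def by (metis powr_minus_divide)
    moreover have "((3 + \<rho>) / (1 - \<rho>) * \<tau>) / s powr (1 / q - 1 / p) = ((3 + \<rho>) / (1 - \<rho>) * \<tau>) * (1 / s powr (1/q - 1/p))" by simp
    ultimately show ?thesis unfolding D_def Av_def v_def by simp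
  qed
  have "best_s_term_error B blk w 1 s x = Inf Set" unfolding best_s_term_error_def Set_def ..
  then have "wnorm B blk w p (z - x) \<le> K * (wnorm B blk w 1 z - wnorm B blk w 1 x + 2 * best_s_term_error B blk w 1 s x) + D"
    using fin unfolding W_def Z_def v_def by simp
  then show ?thesis unfolding c1 c2 .
qed



theorem mainTheorem4:
  fixes m N B :: nat and blk :: "nat \<Rightarrow> nat set" and w :: "nat \<Rightarrow> real"
    and A :: "nat \<Rightarrow> nat \<Rightarrow> real" and p q s \<rho> \<tau> :: real
  assumes part: "is_block_partition N B blk"
    and weights: "\<forall>b<B. w b \<ge> 1"
    and pq: "1 \<le> p" "p \<le> q" "q \<le> 2"
    and s: "s \<ge> (winf B w)\<^sup>2"
    and rho: "0 < \<rho>" "\<rho> < 1" and tau: "0 < \<tau>"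
    and nsp: "wBRNSP m N B blk w A q s \<rho> \<tau>"
  shows "\<forall>x z :: nat \<Rightarrow> real.
    wnorm B blk w p (z - x)
      \<le> ((1 + \<rho>)\<^sup>2 / (1 - \<rho>)) / s powr (1 - 1 / p)
          * (wnorm B blk w 1 z - wnorm B blk w 1 x + 2 * best_s_term_error B blk w 1 s x)
        + ((3 + \<rho>) / (1 - \<rho>) * \<tau>) / s powr (1 / q - 1 / p)
          * eucl_norm m (mat_apply N A (z - x))"
proof (intro allI)
  fix x z :: "nat \<Rightarrow> real"
  have s0: "s \<ge> 0" using s by (meson order_trans zero_le_power2)
  show "wnorm B blk w p (z - x)
      \<le> ((1 + \<rho>)\<^sup>2 / (1 - \<rho>)) / s powr (1 - 1 / p)
          * (wnorm B blk w 1 z - wnorm B blk w 1 x + 2 * best_s_term_error B blk w 1 s x)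
        + ((3 + \<rho>) / (1 - \<rho>) * \<tau>) / s powr (1 / q - 1 / p)
          * eucl_norm m (mat_apply N A (z - x))"
  proof (cases "s = 0")
    case True
    have "B = 0"
    proof (rule ccontr)
      assume "B \<noteq> 0"
      then have "w 0 \<le> winf B w" unfolding winf_def by (intro Max_ge) auto
      moreover have "w 0 \<ge> 1" using weights \<open>B \<noteq> 0\<close> by auto
      ultimately have "(winf B w)\<^sup>2 \<ge> 1" by (metis one_le_power order_trans)
      then show False using s True by simp
    qed
    then show ?thesis using True by (simp add: wnorm_def)
  next
    case False
    then have spos: "s > 0" using s0 by simp
    show ?thesis by (rule main_pos[OF part weights pq spos rho tau nsp])
  qed
qed


end
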